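(* Let $d \ge 2$ and let $c_0,\dots,c_7 \in \mathbb{Z}_d$. The $d$-state first degree cellular automaton with parameters $\langle c_0,c_1,c_2,c_3,c_4,c_5,c_6,c_7\rangle$ is reversible for every number of cells $n \in \mathbb{N}$ (i.e. $G_n$ is a bijection of $\mathbb{Z}_d^n$ for every $n\ge 1$) if and only if all three of the following conditions hold: (1) $\gcd(c_5,d)=1$ (with $c_7$ arbitrary in $\mathbb{Z}_d$); (2) $c_0 \equiv c_1 \equiv c_2 \equiv c_3 \equiv 0 \pmod{\mathrm{rad}(d)}$; (3) $c_4 \cdot c_6 \equiv 0 \pmod{\mathrm{rad}(d)}$.
   Context: Fix an integer $d\ge 2$ and the state set $S=\mathbb{Z}_d=\{0,1,\dots,d-1\}$. A first degree cellular automaton (FDCA) with parameters $\langle c_0,\dots,c_7\rangle$, $c_i\in\mathbb{Z}_d$, is the one-dimensional 3-neighborhood cellular automaton whose local rule $R:S^3\to S$ is $R(x,y,z)=c_0xyz+c_1xy+c_2xz+c_3yz+c_4x+c_5y+c_6z+c_7 \pmod d$. For $n\in\mathbb{N}$, $n\ge1$, the $n$-cell automaton under the null boundary condition acts on configurations $x=(x_0,\dots,x_{n-1})\in S^n$ by the global map $G_n:S^n\to S^n$, $G_n(x)_i=R(x_{i-1},x_i,x_{i+1})$ for $0\le i\le n-1$, with the convention $x_{-1}=x_n=0$. The automaton is reversible for a given $n$ if $G_n$ is a bijection. $\mathrm{rad}(d)=\prod_{p\mid d,\ p\text{ prime}}p$ is the product of the distinct primes dividing $d$; since $\mathrm{rad}(d)\mid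 d$, congruences of elements of $\mathbb{Z}_d$ modulo $\mathrm{rad}(d)$ are well defined. *)

theory Defs
  imports "HOL-Computational_Algebra.Primes"
begin

definition rad :: "int \<Rightarrow> int" where
  "rad d = (\<Prod>p\<in>prime_factors d. p)"

definition fdca_rule :: "int \<Rightarrow> (nat \<Rightarrow> int) \<Rightarrow> int \<Rightarrow> int \<Rightarrow> int \<Rightarrow> int" where
  "fdca_rule d c x y z =
     (c 0 * x * y * z + c 1 * x * y + c 2 * x * z + c 3 * y * z
      + c 4 * x + c 5 * y + c 6 * z + c 7) mod d"

text \<open>Configurations of n cells: functions nat => int with values in Z_d on cells 0..n-1
  and 0 elsewhere (so that the null boundary x_n = 0 is built in).\<close>
definition configs :: "int \<Rightarrow> nat \<Rightarrow> (nat \<Rightarrow> int) set" where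
  "configs d n = {x. (\<forall>i<n. 0 \<le> x i \<and> x i < d) \<and> (\<forall>i\<ge>n. x i = 0)}"

definition global_map :: "int \<Rightarrow> (nat \<Rightarrow> int) \<Rightarrow> nat \<Rightarrow> (nat \<Rightarrow> int) \<Rightarrow> (nat \<Rightarrow> int)" where
  "global_map d c n x = (\<lambda>i. if i < n then
      fdca_rule d c (if i = 0 then 0 else x (i - 1)) (x i) (if i + 1 < n then x (i + 1) else 0)
    else 0)"

definition reversible :: "int \<Rightarrow> (nat \<Rightarrow> int) \<Rightarrow> nat \<Rightarrow> bool" where
  "reversible d c n \<longleftrightarrow> bij_betw (global_map d c n) (configs d n) (configs d n)"

end

theory Submission
  imports Defs "HOL-Number_Theory.Cong"
begin

definition P3 :: "(nat \<Rightarrow> int) \<Rightarrow> int \<Rightarrow> int \<Rightarrow> int \<Rightarrow> int" where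
  "P3 c x y z = c 0 * x * y * z + c 1 * x * y + c 2 * x * z + c 3 * y * z
      + c 4 * x + c 5 * y + c 6 * z + c 7"

definition Lf :: "(nat \<Rightarrow> int) \<Rightarrow> nat \<Rightarrow> int" where
  "Lf x i = (if i = 0 then 0 else x (i - 1))"
definition Rf :: "nat \<Rightarrow> (nat \<Rightarrow> int) \<Rightarrow> nat \<Rightarrow> int" where
  "Rf n x i = (if i + 1 < n then x (i + 1) else 0)"

lemma gm_eq: "global_map d c n x i = (if i < n then P3 c (Lf x i) (x i) (Rf n x i) mod d else 0)"
  by (simp add: global_map_def fdca_rule_def P3_def Lf_def Rf_def)

lemma P3_mod: "P3 c (a mod p) (b mod p) (e mod p) mod p = P3 c a b e mod (p::int)"
  unfolding P3_def cong_def[symmetric]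
  by (intro cong_add cong_mult cong_refl) (simp_all add: cong_def)

lemma configs_alt: "configs d n = {x. \<forall>i. (i \<in> {..<n} \<longrightarrow> x i \<in> {0..<d}) \<and> (i \<notin> {..<n} \<longrightarrow> x i = 0)}"
  unfolding configs_def
proof (intro Collect_cong iffI allI)
  fix x i assume "(\<forall>i<n. 0 \<le> x i \<and> x i < d) \<and> (\<forall>i\<ge>n. x i = 0)"
  thus "(i \<in> {..<n} \<longrightarrow> x i \<in> {0..<d}) \<and> (i \<notin> {..<n} \<longrightarrow> x i = 0)" by simp
next
  fix x assume h: "\<forall>i. (i \<in> {..<n} \<longrightarrow> x i \<in> {0..<d}) \<and> (i \<notin> {..<n} \<longrightarrow> x i = 0)"
  show "(\<forall>i<n. 0 \<le> x i \<and> x i < d) \<and> (\<forall>i\<ge>n. x i = 0)"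
  proof
    show "\<forall>i<n. 0 \<le> x i \<and> x i < d" using h by simp
    show "\<forall>i\<ge>n. x i = 0" using h by simp
  qed
qed
lemma finite_configs: "finite (configs d n)"
  unfolding configs_alt by (rule finite_set_of_finite_funs) auto

lemma gm_in: "d > 0 \<Longrightarrow> global_map d c n x \<in> configs d n"
  by (auto simp: configs_def gm_eq)

definition cfg :: "int \<Rightarrow> nat \<Rightarrow> (nat \<Rightarrow> int) \<Rightarrow> nat \<Rightarrow> int" where
  "cfg p n x = (\<lambda>i. if i < n then x i mod p else 0)"

lemma cfg_in: "p > 0 \<Longrightarrow> cfg p n x \<in> configs p n"
  by (auto simp: configs_def cfg_def)

lemma gm_cfg: "p > 0 \<Longrightarrow> global_map p c n (cfg p n x) = global_map p c n x"
proof
  fix i assume p: "p > 0"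
  show "global_map p c n (cfg p n x) i = global_map p c n x i"
  proof (cases "i < n")
    case True
    have "Lf (cfg p n x) i = Lf x i mod p" using True by (auto simp: Lf_def cfg_def)
    moreover have "Rf n (cfg p n x) i = Rf n x i mod p" by (auto simp: Rf_def cfg_def)
    moreover have "cfg p n x i = x i mod p" using True by (simp add: cfg_def)
    ultimately show ?thesis using True by (simp add: gm_eq P3_mod)
  qed (simp add: gm_eq)
qed

lemma collision:
  assumes p: "p > 0" and rev: "reversible p c n"
    and eq: "\<forall>i<n. P3 c (Lf x i) (x i) (Rf n x i) mod p = P3 c (Lf y i) (y i) (Rf n y i) mod p"
  shows "\<forall>i<n. x i mod p = y i mod p"
proof -
  have "global_map p c n x = global_map p c n y"
    using eq by (auto simp: gm_eq)
  hence "global_map p c n (cfg p n x) = global_map p c n (cfg p n y)"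
    using p by (simp add: gm_cfg)
  moreover have "inj_on (global_map p c n) (configs p n)"
    using rev by (simp add: reversible_def bij_betw_def)
  ultimately have "cfg p n x = cfg p n y" using cfg_in[OF p] by (meson inj_onD)
  thus ?thesis by (metis cfg_def)
qed

lemma reduce:
  assumes p: "p > 0" and pd: "p dvd d" and d: "d > 0" and rev: "reversible d c n"
  shows "reversible p c n"
proof -
  have sub: "configs p n \<subseteq> configs d n"
    using zdvd_imp_le[OF pd d] by (auto simp: configs_def)
  have img: "global_map p c n ` configs p n = configs p n"
  proof
    show "global_map p c n ` configs p n \<subseteq> configs p n" using gm_in[OF p] by auto
  next
    show "configs p n \<subseteq> global_map p c n ` configs p n"
    proof
      fix y assume y: "y \<in> configs p n"
      then have "y \<in> global_map d c n ` configs d n"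
        using sub rev by (auto simp: reversible_def bij_betw_def)
      then obtain x where x: "x \<in> configs d n" "y = global_map d c n x" by auto
      have "global_map p c n (cfg p n x) = y"
      proof
        fix i
        show "global_map p c n (cfg p n x) i = y i"
        proof (cases "i < n")
          case True
          have "y i = y i mod p" using y True by (simp add: configs_def)
          also have "\<dots> = P3 c (Lf x i) (x i) (Rf n x i) mod p"
            using x True pd by (simp add: gm_eq mod_mod_cancel)
          finally show ?thesis using True p by (simp add: gm_cfg gm_eq)
        next
          case False thus ?thesis using y by (simp add: gm_eq configs_def)
        qed
      qed
      thus "y \<in> global_map p c n ` configs p n" using cfg_in[OF p] by (metis image_eqI)
    qed
  qed
  hence "inj_on (global_map p c n) (configs p n)"
    by (simp add: eq_card_imp_inj_on finite_configs)
  thus ?thesis using img by (simp add: reversible_def bij_betw_def)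
qed

lemma inv_ex:
  assumes "prime (p::int)" "\<not> p dvd a"
  shows "\<exists>e. p dvd (a * e - 1)"
proof -
  have "coprime a p" using assms by (metis prime_imp_coprime coprime_commute)
  then obtain u v where "u * a + v * p = 1" using bezout_int[of a p] by auto
  hence "a * u - 1 = p * (- v)" by (simp add: algebra_simps)
  thus ?thesis by (metis dvd_triv_left)
qed

lemma P3_diff: "P3 c u v w - P3 c u' v' w' =
   c 0 * (u * v * (w - w') + u * w' * (v - v') + v' * w' * (u - u'))
 + c 1 * (u * (v - v') + v' * (u - u')) + c 2 * (u * (w - w') + w' * (u - u'))
 + c 3 * (v * (w - w') + w' * (v - v')) + c 4 * (u - u') + c 5 * (v - v') + c 6 * (w - w')"
  unfolding P3_def by (simp add: algebra_simps)

lemma step_dvd: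
  fixes p :: int and k :: nat
  assumes pc: "p dvd c 0" "p dvd c 1" "p dvd c 2" "p dvd c 3"
    and du: "p ^ k dvd (u - u')" and dv: "p ^ k dvd (v - v')" and dw: "p ^ k dvd (w - w')"
    and q: "p ^ Suc k dvd P3 c u v w - P3 c u' v' w'"
  shows "p ^ Suc k dvd c 4 * (u - u') + c 5 * (v - v') + c 6 * (w - w')"
proof -
  have m: "p ^ Suc k dvd a * b" if "p dvd a" "p ^ k dvd b" for a b
    using mult_dvd_mono[OF that] by (simp add: mult.commute)
  have "p ^ Suc k dvd c 0 * (u * v * (w - w') + u * w' * (v - v') + v' * w' * (u - u'))
 + c 1 * (u * (v - v') + v' * (u - u')) + c 2 * (u * (w - w') + w' * (u - u'))
 + c 3 * (v * (w - w') + w' * (v - v'))"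
    by (intro dvd_add m pc dvd_mult du dv dw)
  from dvd_diff[OF q this] show ?thesis unfolding P3_diff by (simp add: algebra_simps)
qed

lemma inj_step:
  fixes p :: int and k :: nat
  assumes d: "d > 0" and pc: "p dvd c 0" "p dvd c 1" "p dvd c 2" "p dvd c 3"
    and c46: "p dvd c 4 \<or> p dvd c 6"
    and cop: "coprime (c 5) d"
    and qd: "p ^ Suc k dvd d"
    and eq: "\<forall>i<n. P3 c (Lf x i) (x i) (Rf n x i) mod d = P3 c (Lf y i) (y i) (Rf n y i) mod d"
    and ih: "\<forall>i<n. p ^ k dvd (x i - y i)"
  shows "\<forall>i<n. p ^ Suc k dvd (x i - y i)"
proof -
  let ?q = "p ^ Suc k"
  have pd: "p dvd d" using qd by (meson dvd_power dvd_trans zero_less_Suc)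
  have cq: "coprime ?q (c 5)" using cop qd by (metis coprime_commute coprime_divisors dvd_refl)
  have ihL: "p ^ k dvd Lf x i - Lf y i" if "i < n" for i
    using ih that by (auto simp: Lf_def)
  have ihR: "p ^ k dvd Rf n x i - Rf n y i" for i
    using ih by (auto simp: Rf_def)
  have lin: "?q dvd c 4 * (Lf x i - Lf y i) + c 5 * (x i - y i) + c 6 * (Rf n x i - Rf n y i)"
    if i: "i < n" for i
  proof (rule step_dvd[OF pc ihL[OF i] _ ihR])
    show "p ^ k dvd x i - y i" using ih i by auto
    have "d dvd P3 c (Lf x i) (x i) (Rf n x i) - P3 c (Lf y i) (y i) (Rf n y i)"
      using eq i by (simp add: mod_eq_dvd_iff)
    thus "?q dvd P3 c (Lf x i) (x i) (Rf n x i) - P3 c (Lf y i) (y i) (Rf n y i)"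
      using qd dvd_trans by blast
  qed
  have m: "?q dvd a * b" if "p dvd a" "p ^ k dvd b" for a b
    using mult_dvd_mono[OF that] by (simp add: mult.commute)
  show ?thesis
  proof (cases "p dvd c 6")
    case True
    show ?thesis
    proof (intro allI impI)
      fix i assume "i < n"
      thus "?q dvd x i - y i"
      proof (induction i)
        case 0
        have "?q dvd c 6 * (Rf n x 0 - Rf n y 0)" by (rule m[OF True ihR])
        with lin[OF 0] have "?q dvd c 5 * (x 0 - y 0)"
          by (simp add: Lf_def) (metis add_diff_cancel_right' dvd_diff)
        thus ?case using cq by (simp add: coprime_dvd_mult_right_iff)
      next
        case (Suc i)
        have "?q dvd c 6 * (Rf n x (Suc i) - Rf n y (Suc i))" by (rule m[OF True ihR])
        moreover have "?q dvd c 4 * (Lf x (Suc i) - Lf y (Suc i))"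
          using Suc by (simp add: Lf_def)
        ultimately have "?q dvd c 5 * (x (Suc i) - y (Suc i))" using lin[OF Suc.prems]
          by (metis add_diff_cancel_right' add_diff_cancel_left' dvd_diff)
        thus ?case using cq by (simp add: coprime_dvd_mult_right_iff)
      qed
    qed
  next
    case False
    hence c4: "p dvd c 4" using c46 by auto
    have main: "\<forall>j. j < n \<longrightarrow> ?q dvd x (n - Suc j) - y (n - Suc j)"
    proof (intro allI)
      fix j show "j < n \<longrightarrow> ?q dvd x (n - Suc j) - y (n - Suc j)"
      proof (induction j)
        case 0
        show ?case
        proof
          assume n: "0 < n"
          have "?q dvd c 4 * (Lf x (n - 1) - Lf y (n - 1))" using n by (intro m[OF c4 ihL]) auto
          moreover have "Rf n x (n - 1) - Rf n y (n - 1) = 0" using n by (simp add: Rf_def)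
          ultimately have "?q dvd c 5 * (x (n - 1) - y (n - 1))" using lin[of "n - 1"] n
            by (metis add.right_neutral add_diff_cancel_left' diff_less dvd_diff mult_zero_right zero_less_one)
          thus "?q dvd x (n - Suc 0) - y (n - Suc 0)" using cq by (simp add: coprime_dvd_mult_right_iff)
        qed
      next
        case (Suc j)
        show ?case
        proof
          assume j: "Suc j < n"
          let ?i = "n - Suc (Suc j)"
          have i: "?i < n" using j by auto
          have "?q dvd c 4 * (Lf x ?i - Lf y ?i)" using i by (intro m[OF c4 ihL])
          moreover have "Rf n x ?i - Rf n y ?i = x (n - Suc j) - y (n - Suc j)"
            using j by (simp add: Rf_def Suc_diff_Suc)
          moreover have "?q dvd x (n - Suc j) - y (n - Suc j)" using Suc.IH j by auto
          ultimately have "?q dvd c 5 * (x ?i - y ?i)" using lin[OF i]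
            by (metis add_diff_cancel_left' add_diff_cancel_right' dvd_diff dvd_mult)
          thus "?q dvd x ?i - y ?i" using cq by (simp add: coprime_dvd_mult_right_iff)
        qed
      qed
    qed
    show ?thesis
    proof (intro allI impI)
      fix i assume i: "i < n"
      have "n - Suc (n - Suc i) = i" using i by auto
      thus "?q dvd x i - y i" using main[rule_format, of "n - Suc i"] i by auto
    qed
  qed
qed

lemma if_dir:
  assumes d: "d \<ge> 2" and cop: "coprime (c 5) d"
    and cond: "\<forall>p. prime p \<longrightarrow> p dvd d \<longrightarrow> p dvd c 0 \<and> p dvd c 1 \<and> p dvd c 2 \<and> p dvd c 3 \<and> (p dvd c 4 \<or> p dvd c 6)"
  shows "reversible d c n"
proof -
  have inj: "inj_on (global_map d c n) (configs d n)"
  proof (rule inj_onI)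
    fix x y assume x: "x \<in> configs d n" and y: "y \<in> configs d n"
      and g: "global_map d c n x = global_map d c n y"
    have eq: "\<forall>i<n. P3 c (Lf x i) (x i) (Rf n x i) mod d = P3 c (Lf y i) (y i) (Rf n y i) mod d"
      using g by (metis gm_eq)
    have pk: "\<forall>i<n. p ^ k dvd (x i - y i)" if p: "prime p" and k: "k \<le> multiplicity p d" for p k
      using k
    proof (induction k)
      case 0 thus ?case by simp
    next
      case (Suc k)
      have qd: "p ^ Suc k dvd d"
        using Suc.prems multiplicity_dvd[of p d] by (meson dvd_trans le_imp_power_dvd)
      have pd: "p dvd d" using qd by (meson dvd_power dvd_trans zero_less_Suc)
      show ?case
        using cond p pd by (intro inj_step[OF _ _ _ _ _ _ cop qd eq Suc.IH]) (use d Suc.prems in auto)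
    qed
    have "x i = y i" for i
    proof (cases "i < n")
      case i: True
      have "d dvd (x i - y i)"
      proof (cases "x i - y i = 0")
        case False
        show ?thesis
        proof (rule multiplicity_le_imp_dvd)
          show "d \<noteq> 0" using d by simp
          fix p :: int assume p: "prime p"
          show "multiplicity p d \<le> multiplicity p (x i - y i)"
            using pk[OF p order.refl] i False p by (intro multiplicity_geI) (auto simp: not_prime_unit)
        qed
      qed simp
      moreover have "\<bar>x i - y i\<bar> < d"
      proof -
        have "0 \<le> x i" "x i < d" "0 \<le> y i" "y i < d" using x y i by (auto simp: configs_def)
        thus ?thesis by linarith
      qed
      ultimately show ?thesis using dvd_imp_le_int[of "x i - y i" d] d by fastforce
    next
      case False thus ?thesis using x y by (simp add: configs_def)
    qed
    thus "x = y" by auto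
  qed
  have "global_map d c n ` configs d n = configs d n"
    using d by (intro endo_inj_surj finite_configs inj) (auto intro: gm_in)
  thus ?thesis using inj by (simp add: reversible_def bij_betw_def)
qed

lemma dvd_lin: "(p::int) dvd g \<Longrightarrow> p dvd g * q" by simp

lemma mod_eq_of_dvd: "(p::int) dvd b - a \<Longrightarrow> a mod p = b mod p"
  by (simp add: mod_eq_dvd_iff dvd_diff_commute)

lemma coll1:
  assumes "p > 0" "reversible p c 1" "p dvd P3 c 0 a' 0 - P3 c 0 a 0"
  shows "p dvd a' - a"
proof -
  let ?x = "\<lambda>i::nat. a" and ?y = "\<lambda>i::nat. a'"
  have "\<forall>i<1. ?x i mod p = ?y i mod p"
    by (rule collision[OF assms(1,2)]) (use assms(3) in \<open>auto simp: Lf_def Rf_def intro: mod_eq_of_dvd\<close>)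
  thus ?thesis by (simp add: mod_eq_dvd_iff dvd_diff_commute)
qed

lemma coll2:
  assumes "p > 0" "reversible p c 2"
    "p dvd P3 c 0 a' b' - P3 c 0 a b" "p dvd P3 c a' b' 0 - P3 c a b 0"
  shows "p dvd a' - a \<and> p dvd b' - b"
proof -
  let ?x = "\<lambda>i::nat. [a, b] ! i" and ?y = "\<lambda>i::nat. [a', b'] ! i"
  have "\<forall>i<2. ?x i mod p = ?y i mod p"
  proof (rule collision[OF assms(1,2)])
    show "\<forall>i<2. P3 c (Lf ?x i) (?x i) (Rf 2 ?x i) mod p = P3 c (Lf ?y i) (?y i) (Rf 2 ?y i) mod p"
      using assms(3,4) by (auto simp: Lf_def Rf_def less_Suc_eq numeral_eq_Suc intro: mod_eq_of_dvd)
  qed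
  hence "a mod p = a' mod p" "b mod p = b' mod p" by (auto dest: spec[of _ 0] spec[of _ 1])
  thus ?thesis by (simp add: mod_eq_dvd_iff dvd_diff_commute)
qed

lemma coll3:
  assumes "p > 0" "reversible p c 3"
    "p dvd P3 c 0 a' b' - P3 c 0 a b" "p dvd P3 c a' b' e' - P3 c a b e"
    "p dvd P3 c b' e' 0 - P3 c b e 0"
  shows "p dvd b' - b"
proof -
  let ?x = "\<lambda>i::nat. [a, b, e] ! i" and ?y = "\<lambda>i::nat. [a', b', e'] ! i"
  have "\<forall>i<3. ?x i mod p = ?y i mod p"
  proof (rule collision[OF assms(1,2)])
    show "\<forall>i<3. P3 c (Lf ?x i) (?x i) (Rf 3 ?x i) mod p = P3 c (Lf ?y i) (?y i) (Rf 3 ?y i) mod p"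
      using assms(3-5) by (auto simp: Lf_def Rf_def less_Suc_eq numeral_eq_Suc intro: mod_eq_of_dvd)
  qed
  hence "b mod p = b' mod p" by (auto dest: spec[of _ 1])
  thus ?thesis by (simp add: mod_eq_dvd_iff dvd_diff_commute)
qed

lemma coll4:
  assumes "p > 0" "reversible p c 4"
    "p dvd P3 c 0 a' b' - P3 c 0 a b" "p dvd P3 c a' b' e' - P3 c a b e"
    "p dvd P3 c b' e' f' - P3 c b e f" "p dvd P3 c e' f' 0 - P3 c e f 0"
  shows "p dvd b' - b"
proof -
  let ?x = "\<lambda>i::nat. [a, b, e, f] ! i" and ?y = "\<lambda>i::nat. [a', b', e', f'] ! i"
  have "\<forall>i<4. ?x i mod p = ?y i mod p"
  proof (rule collision[OF assms(1,2)])
    show "\<forall>i<4. P3 c (Lf ?x i) (?x i) (Rf 4 ?x i) mod p = P3 c (Lf ?y i) (?y i) (Rf 4 ?y i) mod p"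
      using assms(3-6) by (auto simp: Lf_def Rf_def less_Suc_eq numeral_eq_Suc intro: mod_eq_of_dvd)
  qed
  hence "b mod p = b' mod p" by (auto dest: spec[of _ 1])
  thus ?thesis by (simp add: mod_eq_dvd_iff dvd_diff_commute)
qed

lemma caseA:
  assumes "prime p" "reversible p c 1" "p dvd c 5"
  shows False
proof -
  have p: "p > 1" using assms(1) prime_gt_1_int by blast
  have "P3 c 0 1 0 - P3 c 0 0 0 = c 5" by (simp add: P3_def)
  hence "p dvd 1 - 0" using coll1[of p c 1 0] p assms by simp
  thus False using p by (simp add: zdvd_not_zless)
qed

lemma caseB_gen:
  assumes pr: "prime p" and rev: "reversible p c 2"
    and e1: "p dvd c 3 * W + c 5 * \<alpha> + c 6 * \<beta>" and e2: "p dvd c 1 * W + c 4 * \<alpha> + c 5 * \<beta>"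
    and nz: "\<not> (p dvd \<alpha> \<and> p dvd \<beta>)"
  shows False
proof -
  have p: "p > 0" using pr prime_gt_0_int by blast
  obtain a b where ab: "p dvd a * \<beta> + b * \<alpha> - (W - \<alpha> * \<beta>)"
  proof (cases "p dvd \<beta>")
    case False
    then obtain e where e: "p dvd \<beta> * e - 1" using inv_ex[OF pr] by blast
    have "(W - \<alpha> * \<beta>) * e * \<beta> + 0 * \<alpha> - (W - \<alpha> * \<beta>) = (W - \<alpha> * \<beta>) * (\<beta> * e - 1)"
      by (simp add: algebra_simps)
    thus ?thesis using e that[of "(W - \<alpha> * \<beta>) * e" 0] by (metis dvd_mult)
  next
    case True
    hence "\<not> p dvd \<alpha>" using nz by blast
    then obtain e where e: "p dvd \<alpha> * e - 1" using inv_ex[OF pr] by blast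
    have "0 * \<beta> + (W - \<alpha> * \<beta>) * e * \<alpha> - (W - \<alpha> * \<beta>) = (W - \<alpha> * \<beta>) * (\<alpha> * e - 1)"
      by (simp add: algebra_simps)
    thus ?thesis using e that[of 0 "(W - \<alpha> * \<beta>) * e"] by (metis dvd_mult)
  qed
  have "P3 c 0 (a + \<alpha>) (b + \<beta>) - P3 c 0 a b
      = c 3 * (a * \<beta> + b * \<alpha> - (W - \<alpha> * \<beta>)) + (c 3 * W + c 5 * \<alpha> + c 6 * \<beta>)"
    by (simp add: P3_def algebra_simps)
  hence h1: "p dvd P3 c 0 (a + \<alpha>) (b + \<beta>) - P3 c 0 a b" using ab e1 by simp
  have "P3 c (a + \<alpha>) (b + \<beta>) 0 - P3 c a b 0
      = c 1 * (a * \<beta> + b * \<alpha> - (W - \<alpha> * \<beta>)) + (c 1 * W + c 4 * \<alpha> + c 5 * \<beta>)"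
    by (simp add: P3_def algebra_simps)
  hence h2: "p dvd P3 c (a + \<alpha>) (b + \<beta>) 0 - P3 c a b 0" using ab e2 by simp
  from coll2[OF p rev h1 h2] nz show False by simp
qed

lemma caseB:
  assumes pr: "prime p" and rev: "reversible p c 2" and c5: "\<not> p dvd c 5"
    and c13: "\<not> p dvd c 1 \<or> \<not> p dvd c 3"
  shows False
proof (cases "p dvd c 6 * c 1 - c 3 * c 5 \<and> p dvd c 3 * c 4 - c 5 * c 1")
  case False
  show False
    by (rule caseB_gen[OF pr rev, of "c 5 * c 5 - c 6 * c 4" "c 6 * c 1 - c 3 * c 5" "c 3 * c 4 - c 5 * c 1"])
       (use False in \<open>simp_all add: algebra_simps\<close>)
next
  case True
  have c3: "\<not> p dvd c 3"
  proof
    assume c3: "p dvd c 3"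
    have "c 6 * c 1 = (c 6 * c 1 - c 3 * c 5) + c 3 * c 5" by simp
    hence "p dvd c 6 * c 1" using True c3 by (metis dvd_add dvd_mult2)
    have "c 5 * c 1 = c 3 * c 4 - (c 3 * c 4 - c 5 * c 1)" by simp
    hence "p dvd c 5 * c 1" using True c3 by (metis dvd_diff dvd_mult2)
    thus False using c5 c13 c3 pr by (simp add: prime_dvd_mult_iff)
  qed
  have "c 3 * (c 4 * c 6 - c 5 * c 5) = c 6 * (c 3 * c 4 - c 5 * c 1) + c 5 * (c 6 * c 1 - c 3 * c 5)"
    by (simp add: algebra_simps)
  hence "p dvd c 3 * (c 4 * c 6 - c 5 * c 5)" using True by simp
  hence h: "p dvd c 4 * c 6 - c 5 * c 5" using c3 pr by (simp add: prime_dvd_mult_iff)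
  show False
    by (rule caseB_gen[OF pr rev, of 0 "c 6" "- c 5"])
       (use h c5 in \<open>simp_all add: algebra_simps\<close>)
qed

lemma caseC:
  assumes pr: "prime p" and rev: "reversible p c 3"
    and c1: "p dvd c 1" and c3: "p dvd c 3" and c0: "\<not> p dvd c 0" and c5: "\<not> p dvd c 5"
  shows False
proof -
  have p: "p > 0" using pr prime_gt_0_int by blast
  obtain e0 where e0: "p dvd c 0 * e0 - 1" using inv_ex[OF pr c0] by blast
  obtain e5 where e5: "p dvd c 5 * e5 - 1" using inv_ex[OF pr c5] by blast
  define K where "K = c 5 * c 5 - 2 * c 4 * c 6"
  define b where "b = - c 2 * e0"
  define t where "t = - K * e0 * e5"
  define M where "M = t - (1 + c 6) * (t + c 4)"
  have "P3 c 0 1 (b + c 5) - P3 c 0 (1 + c 6) b = c 3 * ((b + c 5) - (1 + c 6) * b)"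
    unfolding P3_def by algebra
  hence h0: "p dvd P3 c 0 1 (b + c 5) - P3 c 0 (1 + c 6) b" using c3 by simp
  have "P3 c 1 (b + c 5) t - P3 c (1 + c 6) b (t + c 4) =
      c 1 * ((b + c 5) - (1 + c 6) * b) + c 3 * ((b + c 5) * t - b * (t + c 4))
      + (c 0 * e0 - 1) * (- c 2 * M - K * c 5 * e5) - (c 5 * e5 - 1) * K"
    unfolding P3_def M_def t_def b_def K_def by algebra
  hence h1: "p dvd P3 c 1 (b + c 5) t - P3 c (1 + c 6) b (t + c 4)"
    using c1 c3 e0 e5 by (simp add: dvd_lin)
  have "P3 c (b + c 5) t 0 - P3 c b (t + c 4) 0 = c 1 * ((b + c 5) * t - b * (t + c 4))"
    unfolding P3_def by algebra
  hence h2: "p dvd P3 c (b + c 5) t 0 - P3 c b (t + c 4) 0" using c1 by simp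
  from coll3[OF p rev h0 h1 h2] c5 show False by simp
qed

lemma caseD1:
  assumes pr: "prime p" and rev: "reversible p c 3"
    and c0: "p dvd c 0" and c1: "p dvd c 1" and c3: "p dvd c 3"
    and c2: "\<not> p dvd c 2" and c6: "\<not> p dvd c 6" and c5: "\<not> p dvd c 5"
  shows False
proof -
  have p: "p > 0" using pr prime_gt_0_int by blast
  obtain e2 where e2: "p dvd c 2 * e2 - 1" using inv_ex[OF pr c2] by blast
  obtain e6 where e6: "p dvd c 6 * e6 - 1" using inv_ex[OF pr c6] by blast
  define K where "K = c 5 * c 5 - 2 * c 4 * c 6"
  define c' where "c' = K * e2 * e6"
  have "P3 c 0 (- c 6) (c 5) - P3 c 0 0 0 = c 3 * (- c 6 * c 5)"
    unfolding P3_def by algebra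
  hence h0: "p dvd P3 c 0 (- c 6) (c 5) - P3 c 0 0 0" using c3 by simp
  have "P3 c (- c 6) (c 5) c' - P3 c 0 0 (c 4 + c') =
     c 0 * (- c 6 * c 5 * c') + c 1 * (- c 6 * c 5) + c 3 * (c 5 * c')
     - (c 2 * e2 - 1) * (K * c 6 * e6) - (c 6 * e6 - 1) * K"
    unfolding P3_def c'_def K_def by algebra
  hence h1: "p dvd P3 c (- c 6) (c 5) c' - P3 c 0 0 (c 4 + c')"
    using c0 c1 c3 e2 e6 by (simp add: dvd_lin)
  have "P3 c (c 5) c' 0 - P3 c 0 (c 4 + c') 0 = c 1 * (c 5 * c')"
    unfolding P3_def by algebra
  hence h2: "p dvd P3 c (c 5) c' 0 - P3 c 0 (c 4 + c') 0" using c1 by simp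
  from coll3[OF p rev h0 h1 h2] c5 show False by simp
qed

lemma caseD2:
  assumes pr: "prime p" and rev: "reversible p c 3"
    and c0: "p dvd c 0" and c1: "p dvd c 1" and c3: "p dvd c 3" and c6: "p dvd c 6"
    and c2: "\<not> p dvd c 2" and c4: "\<not> p dvd c 4" and c5: "\<not> p dvd c 5"
  shows False
proof -
  have p: "p > 0" using pr prime_gt_0_int by blast
  obtain e2 where e2: "p dvd c 2 * e2 - 1" using inv_ex[OF pr c2] by blast
  obtain e4 where e4: "p dvd c 4 * e4 - 1" using inv_ex[OF pr c4] by blast
  define K where "K = c 5 * c 5 - 2 * c 4 * c 6"
  define a where "a = K * e2 * e4"
  have "P3 c 0 (a - c 6) (c 5) - P3 c 0 a 0 = c 3 * ((a - c 6) * c 5)"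
    unfolding P3_def by algebra
  hence h0: "p dvd P3 c 0 (a - c 6) (c 5) - P3 c 0 a 0" using c3 by simp
  have "P3 c (a - c 6) (c 5) (- c 4) - P3 c a 0 0 =
     c 0 * ((a - c 6) * c 5 * (- c 4)) + c 1 * ((a - c 6) * c 5) + c 3 * (c 5 * (- c 4))
     - (c 2 * e2 - 1) * (K * c 4 * e4) - (c 4 * e4 - 1) * K + c 6 * (c 2 * c 4)"
    unfolding P3_def a_def K_def by algebra
  hence h1: "p dvd P3 c (a - c 6) (c 5) (- c 4) - P3 c a 0 0"
    using c0 c1 c3 c6 e2 e4 by (simp add: dvd_lin)
  have "P3 c (c 5) (- c 4) 0 - P3 c 0 0 0 = c 1 * (c 5 * (- c 4))"
    unfolding P3_def by algebra
  hence h2: "p dvd P3 c (c 5) (- c 4) 0 - P3 c 0 0 0" using c1 by simp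
  from coll3[OF p rev h0 h1 h2] c5 show False by simp
qed

lemma caseE:
  assumes pr: "prime p" and rev: "reversible p c 4"
    and c0: "p dvd c 0" and c1: "p dvd c 1" and c3: "p dvd c 3" and c4: "p dvd c 4" and c6: "p dvd c 6"
    and c2: "\<not> p dvd c 2" and c5: "\<not> p dvd c 5"
  shows False
proof -
  have p: "p > 0" using pr prime_gt_0_int by blast
  obtain e2 where e2: "p dvd c 2 * e2 - 1" using inv_ex[OF pr c2] by blast
  define D where "D = c 5 * c 5 * e2 * e2"
  have "P3 c 0 1 (- c 2) - P3 c 0 1 0 = c 3 * (- c 2) + c 6 * (- c 2)"
    unfolding P3_def by algebra
  hence h0: "p dvd P3 c 0 1 (- c 2) - P3 c 0 1 0" using c3 c6 by simp
  have "P3 c 1 (- c 2) (c 5) - P3 c 1 0 0 =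
      c 0 * (- c 2 * c 5) + c 1 * (- c 2) + c 3 * (- c 2 * c 5) + c 6 * c 5"
    unfolding P3_def by algebra
  hence h1: "p dvd P3 c 1 (- c 2) (c 5) - P3 c 1 0 0" using c0 c1 c3 c6 by simp
  have "P3 c (- c 2) (c 5) D - P3 c 0 0 D =
      c 0 * (- c 2 * c 5 * D) + c 1 * (- c 2 * c 5) + c 3 * (c 5 * D) + c 4 * (- c 2)
      - (c 2 * e2 - 1) * (c 5 * c 5 * (c 2 * e2 + 1))"
    unfolding P3_def D_def by algebra
  hence h2: "p dvd P3 c (- c 2) (c 5) D - P3 c 0 0 D" using c0 c1 c3 c4 e2 by (simp add: dvd_lin)
  have "P3 c (c 5) D 0 - P3 c 0 D 0 = c 1 * (c 5 * D) + c 4 * c 5"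
    unfolding P3_def by algebra
  hence h3: "p dvd P3 c (c 5) D 0 - P3 c 0 D 0" using c1 c4 by simp
  from coll4[OF p rev h0 h1 h2 h3] c2 show False by simp
qed

lemma funpow_in: "f ` S \<subseteq> S \<Longrightarrow> s \<in> S \<Longrightarrow> (f ^^ i) s \<in> S"
  by (induction i) auto

lemma periodic:
  assumes fin: "finite S" and img: "f ` S \<subseteq> S" and inj: "inj_on f S" and s: "s \<in> S"
  shows "\<exists>k>0. (f ^^ k) s = s"
proof -
  have "\<not> inj_on (\<lambda>i. (f ^^ i) s) {..card S}"
  proof
    assume "inj_on (\<lambda>i. (f ^^ i) s) {..card S}"
    moreover have "(\<lambda>i. (f ^^ i) s) ` {..card S} \<subseteq> S" using funpow_in[OF img s] by auto
    ultimately have "card {..card S} \<le> card S" using card_inj_on_le fin by blast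
    thus False by simp
  qed
  then obtain i j where ij: "i \<le> card S" "j \<le> card S" "i \<noteq> j" "(f ^^ i) s = (f ^^ j) s"
    unfolding inj_on_def by auto
  have cancel: "\<And>i m. (f ^^ i) s = (f ^^ (i + m)) s \<Longrightarrow> s = (f ^^ m) s"
  proof -
    fix i m show "(f ^^ i) s = (f ^^ (i + m)) s \<Longrightarrow> s = (f ^^ m) s"
    proof (induction i)
      case 0 thus ?case by simp
    next
      case (Suc i)
      have "f ((f ^^ i) s) = f ((f ^^ (i + m)) s)" using Suc.prems by simp
      hence "(f ^^ i) s = (f ^^ (i + m)) s"
        using inj funpow_in[OF img s] by (meson inj_onD)
      thus ?case by (rule Suc.IH)
    qed
  qed
  show ?thesis
  proof (cases "i < j")
    case True
    hence "(f ^^ i) s = (f ^^ (i + (j - i))) s" using ij by simp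
    hence "s = (f ^^ (j - i)) s" by (rule cancel)
    thus ?thesis using True by (metis zero_less_diff)
  next
    case False
    hence "j < i" using ij by simp
    hence "(f ^^ j) s = (f ^^ (j + (i - j))) s" using ij by simp
    hence "s = (f ^^ (i - j)) s" by (rule cancel)
    thus ?thesis using \<open>j < i\<close> by (metis zero_less_diff)
  qed
qed

lemma caseF:
  assumes pr: "prime p" and rev: "\<forall>n\<ge>1. reversible p c n"
    and c0: "p dvd c 0" and c1: "p dvd c 1" and c2: "p dvd c 2" and c3: "p dvd c 3"
    and c4: "\<not> p dvd c 4" and c6: "\<not> p dvd c 6"
  shows False
proof -
  have p: "p > 1" using pr prime_gt_1_int by blast
  obtain e6 where e6: "p dvd c 6 * e6 - 1" using inv_ex[OF pr c6] by blast
  define T where "T = (\<lambda>(a::int, b::int). (b, (- (c 4 * a + c 5 * b) * e6) mod p))"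
  define S where "S = {0..<p} \<times> {0..<p}"
  have Tfst: "fst (T z) = snd z" for z by (simp add: T_def split: prod.splits)
  have Tsnd: "snd (T z) = (- (c 4 * fst z + c 5 * snd z) * e6) mod p" for z
    by (simp add: T_def split: prod.splits)
  have finS: "finite S" by (simp add: S_def)
  have imgS: "T ` S \<subseteq> S" using p by (auto simp: S_def T_def)
  have injS: "inj_on T S"
  proof (rule inj_onI)
    fix z z' assume z: "z \<in> S" and z': "z' \<in> S" and eq: "T z = T z'"
    obtain a b where ab: "z = (a, b)" by fastforce
    obtain a' b' where ab': "z' = (a', b')" by fastforce
    have bb: "b = b'" using eq Tfst[of z] Tfst[of z'] ab ab' by simp
    have "(- (c 4 * a + c 5 * b) * e6) mod p = (- (c 4 * a' + c 5 * b) * e6) mod p"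
      using eq Tsnd[of z] Tsnd[of z'] ab ab' bb by simp
    hence "p dvd (- (c 4 * a + c 5 * b) * e6) - (- (c 4 * a' + c 5 * b) * e6)"
      by (simp add: mod_eq_dvd_iff)
    hence h: "p dvd c 4 * (a' - a) * e6" by (simp add: algebra_simps)
    have "c 4 * (a' - a) = c 4 * (a' - a) * e6 * c 6 - c 4 * (a' - a) * (c 6 * e6 - 1)"
      by (simp add: algebra_simps)
    hence "p dvd c 4 * (a' - a)" using h e6 by (metis dvd_diff dvd_mult dvd_mult2)
    hence "p dvd a' - a" using c4 pr by (simp add: prime_dvd_mult_iff)
    moreover have "0 \<le> a" "a < p" "0 \<le> a'" "a' < p" using z z' ab ab' by (auto simp: S_def)
    ultimately have "a = a'"
    proof -
      assume d: "p dvd a' - a" and bnd: "0 \<le> a" "a < p" "0 \<le> a'" "a' < p"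
      show "a = a'"
      proof (rule ccontr)
        assume "a \<noteq> a'"
        hence "a' - a \<noteq> 0" by simp
        hence "\<bar>p\<bar> \<le> \<bar>a' - a\<bar>" using dvd_imp_le_int d by blast
        thus False using bnd by linarith
      qed
    qed
    thus "z = z'" using ab ab' bb by simp
  qed
  have s: "(0, 1) \<in> S" using p by (simp add: S_def)
  obtain k where k: "k > 0" "(T ^^ k) (0, 1) = (0, 1)" using periodic[OF finS imgS injS s] by blast
  define P where "P = (\<lambda>i. (T ^^ i) (0::int, 1::int))"
  have P0: "P 0 = (0, 1)" by (simp add: P_def)
  have PS: "P (Suc i) = T (P i)" for i by (simp add: P_def)
  have "k \<noteq> 1"
  proof
    assume "k = 1"
    hence "fst (P 1) = 0" using k by (simp add: P_def)
    thus False using Tfst[of "P 0"] by (simp add: PS P0)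
  qed
  define n where "n = k - 1"
  have n: "n \<ge> 1" "Suc n = k" using k \<open>k \<noteq> 1\<close> by (auto simp: n_def)
  define x where "x = (\<lambda>i. snd (P i))"
  have Lx: "Lf x i = fst (P i)" for i
  proof (cases i)
    case 0 thus ?thesis by (simp add: Lf_def P0)
  next
    case (Suc j) thus ?thesis by (simp add: Lf_def x_def PS Tfst)
  qed
  have Rx: "Rf n x i = snd (P (Suc i))" if "i < n" for i
  proof (cases "i + 1 < n")
    case True thus ?thesis by (simp add: Rf_def x_def)
  next
    case False
    hence "Suc i = n" using that by simp
    moreover have "snd (P n) = 0"
      using Tfst[of "P n"] PS[of n] k n by (simp add: P_def)
    ultimately show ?thesis by (simp add: Rf_def)
  qed
  have "\<forall>i<n. x i mod p = (\<lambda>i. 0::int) i mod p"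
  proof (rule collision[OF _ rev[rule_format, OF n(1)]])
    show "p > 0" using p by simp
    show "\<forall>i<n. P3 c (Lf x i) (x i) (Rf n x i) mod p = P3 c (Lf (\<lambda>i. 0) i) ((\<lambda>i. 0) i) (Rf n (\<lambda>i. 0) i) mod p"
    proof (intro allI impI)
      fix i assume i: "i < n"
      define u where "u = fst (P i)"
      define v where "v = snd (P i)"
      define w where "w = snd (P (Suc i))"
      have w: "w = (- (c 4 * u + c 5 * v) * e6) mod p" by (simp add: w_def PS Tsnd u_def v_def)
      have wd: "p dvd w - (- (c 4 * u + c 5 * v) * e6)"
        unfolding w by (metis mod_eq_dvd_iff mod_mod_trivial)
      have "P3 c u v w - P3 c 0 0 0 = c 0 * (u * v * w) + c 1 * (u * v) + c 2 * (u * w) + c 3 * (v * w)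
          + c 6 * (w - (- (c 4 * u + c 5 * v) * e6)) - (c 6 * e6 - 1) * (c 4 * u + c 5 * v)"
        unfolding P3_def by algebra
      hence "p dvd P3 c u v w - P3 c 0 0 0" using c0 c1 c2 c3 e6 wd by (simp add: dvd_lin)
      hence "P3 c 0 0 0 mod p = P3 c u v w mod p" by (rule mod_eq_of_dvd)
      show "P3 c (Lf x i) (x i) (Rf n x i) mod p = P3 c (Lf (\<lambda>i. 0) i) ((\<lambda>i. 0) i) (Rf n (\<lambda>i. 0) i) mod p"
      proof -
        have z: "Lf (\<lambda>i. 0::int) i = 0" "Rf n (\<lambda>i. 0::int) i = 0" by (simp_all add: Lf_def Rf_def)
        show ?thesis unfolding Lx Rx[OF i] z using \<open>P3 c 0 0 0 mod p = P3 c u v w mod p\<close>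
          by (simp add: u_def v_def w_def x_def)
      qed
    qed
  qed
  hence "x 0 mod p = 0" using n by auto
  thus False using p by (simp add: x_def P0)
qed

lemma nec_prime:
  assumes pr: "prime p" and rev: "\<forall>n\<ge>1. reversible p c n"
  shows "\<not> p dvd c 5 \<and> p dvd c 0 \<and> p dvd c 1 \<and> p dvd c 2 \<and> p dvd c 3 \<and> (p dvd c 4 \<or> p dvd c 6)"
proof -
  have r1: "reversible p c 1" and r2: "reversible p c 2" and r3: "reversible p c 3"
    and r4: "reversible p c 4" using rev by auto
  have c5: "\<not> p dvd c 5" using caseA[OF pr r1] by blast
  have c13: "p dvd c 1 \<and> p dvd c 3" using caseB[OF pr r2 c5] by blast
  have c0: "p dvd c 0" using caseC[OF pr r3] c13 c5 by blast
  have c2: "p dvd c 2"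
  proof (rule ccontr)
    assume c2: "\<not> p dvd c 2"
    show False
    proof (cases "p dvd c 6")
      case False thus False using caseD1[OF pr r3 c0 _ _ c2 False c5] c13 by blast
    next
      case c6: True
      show False
      proof (cases "p dvd c 4")
        case False thus False using caseD2[OF pr r3 c0 _ _ c6 c2 False c5] c13 by blast
      next
        case True thus False using caseE[OF pr r4 c0 _ _ True c6 c2 c5] c13 by blast
      qed
    qed
  qed
  have c46: "p dvd c 4 \<or> p dvd c 6" using caseF[OF pr rev c0 _ c2] c13 by blast
  show ?thesis using c5 c13 c0 c2 c46 by blast
qed

lemma rad_dvd:
  assumes d: "(d::int) \<noteq> 0" and h: "\<forall>p. prime p \<longrightarrow> p dvd d \<longrightarrow> p dvd t"
  shows "rad d dvd t"
proof -
  have "A \<subseteq> prime_factors d \<Longrightarrow> (\<Prod>p\<in>A. p) dvd t" if fin: "finite A" for A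
    using fin
  proof (induction A rule: finite_induct)
    case empty thus ?case by simp
  next
    case (insert a A)
    have a: "prime a" "a dvd d" using insert.prems by (auto simp: in_prime_factors_iff)
    have "coprime a (\<Prod>p\<in>A. p)"
    proof (rule prod_coprime_right)
      fix q assume q: "q \<in> A"
      hence "prime q" using insert.prems by (auto simp: in_prime_factors_iff)
      moreover have "a \<noteq> q" using q insert.hyps by auto
      ultimately show "coprime a q" using a primes_coprime by blast
    qed
    moreover have "a dvd t" using h a by blast
    moreover have "(\<Prod>p\<in>A. p) dvd t" using insert by auto
    ultimately show ?case using insert.hyps by (simp add: divides_mult)
  qed
  thus ?thesis unfolding rad_def by simp
qed

lemma dvd_rad:
  assumes "prime p" "p dvd d" "(d::int) \<noteq> 0" "rad d dvd t"
  shows "p dvd t"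
proof -
  have "p \<in> prime_factors d" using assms by (simp add: in_prime_factors_iff)
  hence "p dvd rad d" unfolding rad_def using dvd_prodI[of "prime_factors d" p "\<lambda>p. p"] by simp
  thus ?thesis using assms(4) by (rule dvd_trans)
qed

theorem theorem1:
  fixes d :: int and c :: "nat \<Rightarrow> int"
  assumes "d \<ge> 2"
    and "\<forall>i\<le>7. 0 \<le> c i \<and> c i < d"
  shows "(\<forall>n\<ge>1. reversible d c n) \<longleftrightarrow>
           (gcd (c 5) d = 1
            \<and> (\<forall>i\<le>3. c i mod rad d = 0)
            \<and> (c 4 * c 6) mod rad d = 0)"
proof
  assume rev: "\<forall>n\<ge>1. reversible d c n"
  have N: "\<not> p dvd c 5 \<and> p dvd c 0 \<and> p dvd c 1 \<and> p dvd c 2 \<and> p dvd c 3 \<and> (p dvd c 4 \<or> p dvd c 6)"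
    if p: "prime p" "p dvd d" for p
  proof (rule nec_prime[OF p(1)])
    show "\<forall>n\<ge>1. reversible p c n"
      using rev reduce[of p d c] p assms(1) prime_gt_0_int by auto
  qed
  have d0: "d \<noteq> 0" using assms(1) by simp
  have g: "gcd (c 5) d = 1"
  proof (rule ccontr)
    assume g1: "gcd (c 5) d \<noteq> 1"
    have "gcd (c 5) d \<noteq> 0" using d0 by simp
    moreover have "\<not> is_unit (gcd (c 5) d)" using g1 by simp
    ultimately obtain q where q: "q dvd gcd (c 5) d" "prime q" using prime_divisor_exists by blast
    thus False using N[of q] by auto
  qed
  have r: "\<forall>i\<le>3. c i mod rad d = 0"
  proof (intro allI impI)
    fix i :: nat assume "i \<le> 3"
    hence "i = 0 \<or> i = 1 \<or> i = 2 \<or> i = 3" by auto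
    hence "rad d dvd c i" using rad_dvd[OF d0] N by auto
    thus "c i mod rad d = 0" by simp
  qed
  have "\<forall>p. prime p \<longrightarrow> p dvd d \<longrightarrow> p dvd c 4 * c 6" using N by (meson dvd_mult dvd_mult2)
  hence "rad d dvd c 4 * c 6" using rad_dvd[OF d0] by blast
  thus "gcd (c 5) d = 1 \<and> (\<forall>i\<le>3. c i mod rad d = 0) \<and> (c 4 * c 6) mod rad d = 0"
    using g r by simp
next
  assume h: "gcd (c 5) d = 1 \<and> (\<forall>i\<le>3. c i mod rad d = 0) \<and> (c 4 * c 6) mod rad d = 0"
  have d0: "d \<noteq> 0" using assms(1) by simp
  have cop: "coprime (c 5) d" using h by (simp add: coprime_iff_gcd_eq_1)
  have cond: "\<forall>p. prime p \<longrightarrow> p dvd d \<longrightarrow> p dvd c 0 \<and> p dvd c 1 \<and> p dvd c 2 \<and> p dvd c 3 \<and> (p dvd c 4 \<or> p dvd c 6)"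
  proof (intro allI impI)
    fix p :: int assume p: "prime p" "p dvd d"
    have "p dvd c i" if "i \<le> 3" for i
      using dvd_rad[OF p d0] h that by (simp add: mod_eq_0_iff_dvd)
    moreover have "p dvd c 4 * c 6" using dvd_rad[OF p d0] h by (simp add: mod_eq_0_iff_dvd)
    ultimately show "p dvd c 0 \<and> p dvd c 1 \<and> p dvd c 2 \<and> p dvd c 3 \<and> (p dvd c 4 \<or> p dvd c 6)"
      using p(1) by (simp add: prime_dvd_mult_iff)
  qed
  show "\<forall>n\<ge>1. reversible d c n" using if_dir[OF assms(1) cop cond] by blast
qed

end
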